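(* Let $S$ be a semidomain. Then $S[x]$ is a GCD-semidomain if and only if $S$ is a GCD-domain (i.e., $S$ is an integral domain and a GCD-semidomain).
   Context: A semidomain is a subset $S$ of an integral domain $R$ containing $0$ and $1$ and closed under addition and multiplication; $S[x]$ is the semidomain of polynomials in $R[x]$ with coefficients in $S$. For a semidomain $T$, $T^*=T\setminus\{0\}$ is a multiplicative monoid. For a nonempty finite subset $F\subseteq T^*$, a greatest common divisor of $F$ is a common divisor $d\in T^*$ of all elements of $F$ (in $T^*$) that is divisible by every common divisor of $F$. $T$ is a GCD-semidomain if every nonempty finite subset of $T^*$ has a greatest common divisor. *)

theory Defs
  imports "HOL-Computational_Algebra.Polynomial"
begin

definition semidomain :: "'a::idom set \<Rightarrow> bool" where
  "semidomain S \<longleftrightarrow> 0 \<in> S \<and> 1 \<in> S \<and>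
     (\<forall>a\<in>S. \<forall>b\<in>S. a + b \<in> S) \<and> (\<forall>a\<in>S. \<forall>b\<in>S. a * b \<in> S)"

definition poly_semidomain :: "'a::idom set \<Rightarrow> 'a poly set" where
  "poly_semidomain S = {p. \<forall>i. coeff p i \<in> S}"

definition sdvd :: "'a::idom set \<Rightarrow> 'a \<Rightarrow> 'a \<Rightarrow> bool" where
  "sdvd T a b \<longleftrightarrow> (\<exists>c\<in>T - {0}. b = a * c)"

definition is_sgcd :: "'a::idom set \<Rightarrow> 'a set \<Rightarrow> 'a \<Rightarrow> bool" where
  "is_sgcd T F d \<longleftrightarrow> d \<in> T - {0} \<and> (\<forall>f\<in>F. sdvd T d f) \<and>
     (\<forall>c\<in>T - {0}. (\<forall>f\<in>F. sdvd T c f) \<longrightarrow> sdvd T c d)"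

definition gcd_semidomain :: "'a::idom set \<Rightarrow> bool" where
  "gcd_semidomain T \<longleftrightarrow>
     (\<forall>F. finite F \<and> F \<noteq> {} \<and> F \<subseteq> T - {0} \<longrightarrow> (\<exists>d. is_sgcd T F d))"

text \<open>A semidomain is an integral domain iff it is closed under additive inverses.\<close>
definition is_domain_sub :: "'a::idom set \<Rightarrow> bool" where
  "is_domain_sub S \<longleftrightarrow> (\<forall>a\<in>S. - a \<in> S)"

end

theory Submission
  imports Defs
begin


lemma sd_simps:
  assumes "semidomain S"
  shows "0 \<in> S" "1 \<in> S" "a \<in> S \<Longrightarrow> b \<in> S \<Longrightarrow> a + b \<in> S" "a \<in> S \<Longrightarrow> b \<in> S \<Longrightarrow> a * b \<in> S"
  using assms unfolding semidomain_def by auto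

lemma PS_iff: "p \<in> poly_semidomain S \<longleftrightarrow> (\<forall>i. coeff p i \<in> S)"
  by (simp add: poly_semidomain_def)

lemma PS_pCons: "semidomain S \<Longrightarrow> a \<in> S \<Longrightarrow> p \<in> poly_semidomain S \<Longrightarrow> pCons a p \<in> poly_semidomain S"
  by (auto simp: PS_iff coeff_pCons split: nat.splits)

lemma PS_0: "semidomain S \<Longrightarrow> 0 \<in> poly_semidomain S"
  by (auto simp: PS_iff sd_simps)

lemma S_sum: "semidomain S \<Longrightarrow> (\<And>i. i \<in> A \<Longrightarrow> f i \<in> S) \<Longrightarrow> sum f A \<in> S"
proof (induction A rule: infinite_finite_induct)
  case (infinite A) then show ?case by (simp add: sd_simps)
next
  case empty then show ?case by (simp add: sd_simps)
next
  case (insert x F) then show ?case by (simp add: sd_simps)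
qed

lemma PS_mult: "semidomain S \<Longrightarrow> p \<in> poly_semidomain S \<Longrightarrow> q \<in> poly_semidomain S \<Longrightarrow> p * q \<in> poly_semidomain S"
  unfolding PS_iff coeff_mult by (auto intro!: S_sum sd_simps)

lemma PS_add: "semidomain S \<Longrightarrow> p \<in> poly_semidomain S \<Longrightarrow> q \<in> poly_semidomain S \<Longrightarrow> p + q \<in> poly_semidomain S"
  unfolding PS_iff by (auto intro!: sd_simps)

lemma PS_1: "semidomain S \<Longrightarrow> 1 \<in> poly_semidomain S"
  by (auto simp: PS_iff sd_simps coeff_1)

lemma PS_const: "semidomain S \<Longrightarrow> a \<in> S \<Longrightarrow> [:a:] \<in> poly_semidomain S"
  by (auto simp: PS_iff sd_simps coeff_pCons split: nat.splits)

lemma PS_smult: "semidomain S \<Longrightarrow> a \<in> S \<Longrightarrow> p \<in> poly_semidomain S \<Longrightarrow> smult a p \<in> poly_semidomain S"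
  by (auto simp: PS_iff sd_simps)

lemma two_in: "semidomain S \<Longrightarrow> (2::'a::idom) \<in> S"
proof -
  assume "semidomain S"
  then have "1 + 1 \<in> S" using sd_simps by blast
  then show ?thesis by (simp add: one_add_one)
qed

lemma F1:
  fixes S :: "'a::idom set"
  assumes sd: "semidomain S" and g: "gcd_semidomain (poly_semidomain S)"
  shows "is_domain_sub S"
proof -
  let ?T = "poly_semidomain S"
  define P :: "'a poly" where "P = [:1,1,1,1,1,1:]"
  define Q :: "'a poly" where "Q = [:1,1+1,1+1,1:]"
  define A :: "'a poly" where "A = [:1,1:]"
  define B :: "'a poly" where "B = [:1,1,1:]"
  have s1: "(1::'a) \<in> S" and s0: "(0::'a) \<in> S" using sd sd_simps by auto
  have s2: "(1+1::'a) \<in> S" using sd_simps(3)[OF sd s1 s1] .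
  note pc = PS_pCons[OF sd] PS_0[OF sd]
  have PT: "P \<in> ?T" unfolding P_def by (intro pc s1)
  have QT: "Q \<in> ?T" unfolding Q_def by (intro pc s1 s2)
  have AT: "A \<in> ?T" unfolding A_def by (intro pc s1)
  have BT: "B \<in> ?T" unfolding B_def by (intro pc s1)
  have c1: "[:1,0,1,0,1:] \<in> ?T" by (intro pc s1 s0)
  have c2: "[:1,0,0,1:] \<in> ?T" by (intro pc s1 s0)
  have P1: "P = A * [:1,0,1,0,1:]" unfolding P_def A_def by simp
  have P2: "P = B * [:1,0,0,1:]" unfolding P_def B_def by simp
  have Q1: "Q = A * B" unfolding Q_def A_def B_def by (simp add: algebra_simps)
  have Q2: "Q = B * A" using Q1 by (simp add: mult.commute)
  have PQ: "P = Q * [:1,-1,1:]" unfolding P_def Q_def by (simp add: algebra_simps)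
  have Pn: "P \<noteq> 0" "Q \<noteq> 0" "A \<noteq> 0" "B \<noteq> 0" unfolding P_def Q_def A_def B_def by auto
  have "finite {P,Q}" "{P,Q} \<noteq> {}" "{P,Q} \<subseteq> ?T - {0}" using PT QT Pn by auto
  then obtain d where d: "is_sgcd ?T {P,Q} d" using g unfolding gcd_semidomain_def by blast
  have nz: "[:1,0,1,0,1:] \<noteq> (0::'a poly)" "[:1,0,0,1:] \<noteq> (0::'a poly)" by auto
  have "sdvd ?T A P" unfolding sdvd_def using P1 c1 nz by blast
  moreover have "sdvd ?T A Q" unfolding sdvd_def using Q1 BT Pn by blast
  ultimately have cdA: "\<forall>f\<in>{P,Q}. sdvd ?T A f" by blast
  have "sdvd ?T B P" unfolding sdvd_def using P2 c2 nz by blast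
  moreover have "sdvd ?T B Q" unfolding sdvd_def using Q2 AT Pn by blast
  ultimately have cdB: "\<forall>f\<in>{P,Q}. sdvd ?T B f" by blast
  from d cdA AT Pn have "sdvd ?T A d" unfolding is_sgcd_def by blast
  then obtain d1 where d1: "d = A * d1" unfolding sdvd_def by blast
  from d cdB BT Pn have "sdvd ?T B d" unfolding is_sgcd_def by blast
  then obtain d2 where d2: "d = B * d2" unfolding sdvd_def by blast
  have "poly d (-1) = 0" using d1 unfolding A_def by simp
  then have "poly d2 (-1) = 0" using d2 unfolding B_def by simp
  then have "[:- (-1), 1:] dvd d2" using poly_eq_0_iff_dvd by blast
  then obtain d3 where d3: "d2 = A * d3" unfolding A_def by auto
  have dQ: "d = Q * d3" using d2 d3 Q2 by (simp add: mult.assoc)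
  from d have "sdvd ?T d Q" unfolding is_sgcd_def by auto
  then obtain e where e: "Q = d * e" "e \<in> ?T" unfolding sdvd_def by blast
  have "Q * 1 = Q * (d3 * e)"
  proof -
    have "Q * 1 = d * e" using e(1) by simp
    also have "\<dots> = Q * d3 * e" by (simp only: dQ)
    finally show ?thesis by (simp only: mult.assoc)
  qed
  then have "1 = d3 * e" by (simp only: mult_left_cancel[OF Pn(2)])
  then have de: "d3 * e = 1" by simp
  then have "degree d3 = 0" "degree e = 0"
    by (metis add_is_0 degree_1 degree_mult_eq mult_eq_0_iff one_neq_zero)+
  then obtain u e0 where ue: "d3 = [:u:]" "e = [:e0:]" by (meson degree_eq_zeroE)
  have ue1: "u * e0 = 1" using de ue by (simp add: one_pCons mult.commute)
  from d have "sdvd ?T d P" unfolding is_sgcd_def by auto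
  then obtain r where r: "P = d * r" "r \<in> ?T" unfolding sdvd_def by blast
  have "Q * [:1,-1,1:] = Q * (smult u r)"
  proof -
    have "Q * [:1,-1,1:] = d * r" using r(1) PQ by simp
    also have "\<dots> = Q * [:u:] * r" by (simp only: dQ ue)
    finally show ?thesis by (simp add: mult.assoc)
  qed
  then have "[:1,-1,1:] = smult u r" by (simp only: mult_left_cancel[OF Pn(2)])
  then have "smult e0 [:1,-1,1:] = smult (e0*u) r" by simp
  then have "r = smult e0 [:1,-1,1:]" using ue1 by (simp add: mult.commute)
  then have "coeff r 1 = - e0" by simp
  then have me0: "- e0 \<in> S" using r(2) PS_iff by metis
  have "coeff d 0 = u" using dQ ue unfolding Q_def by simp
  then have "u \<in> S" using d PS_iff unfolding is_sgcd_def by blast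
  then have m1: "-1 \<in> S" using me0 sd_simps[OF sd] ue1 by (metis mult_minus_right)
  show ?thesis unfolding is_domain_sub_def
    using m1 sd_simps[OF sd] by (metis mult_minus1)
qed



lemma F2:
  fixes S :: "'a::idom set"
  assumes sd: "semidomain S" and g: "gcd_semidomain (poly_semidomain S)"
  shows "gcd_semidomain S"
  unfolding gcd_semidomain_def
proof (intro allI impI)
  let ?T = "poly_semidomain S"
  fix F assume F: "finite F \<and> F \<noteq> {} \<and> F \<subseteq> S - {0}"
  let ?F = "(\<lambda>a. [:a:]) ` F"
  have "finite ?F" "?F \<noteq> {}" "?F \<subseteq> ?T - {0}" using F PS_const[OF sd] by auto
  then obtain d where d: "is_sgcd ?T ?F d" using g unfolding gcd_semidomain_def by blast
  have dT: "d \<in> ?T" "d \<noteq> 0" using d unfolding is_sgcd_def by auto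
  have cf: "\<exists>c. c \<in> S \<and> c \<noteq> 0 \<and> f = coeff d 0 * c" if "f \<in> F" for f
  proof -
    have "sdvd ?T d [:f:]" using d that unfolding is_sgcd_def by auto
    then obtain c where c: "c \<in> ?T" "c \<noteq> 0" "[:f:] = d * c" unfolding sdvd_def by auto
    then have "degree d + degree c = 0" using dT degree_mult_eq by (metis degree_pCons_0)
    then have "degree d = 0" "degree c = 0" by auto
    then obtain d0 c0 where "d = [:d0:]" "c = [:c0:]" by (meson degree_eq_zeroE)
    moreover have "c0 \<in> S" using c(1) \<open>c = [:c0:]\<close> PS_iff by (metis coeff_pCons_0)
    ultimately show ?thesis using c by (auto intro!: exI[of _ c0])
  qed
  obtain f0 where "f0 \<in> F" using F by auto
  then obtain c0 where "c0 \<in> S" "f0 = coeff d 0 * c0" "f0 \<noteq> 0" using cf F by blast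
  have d0: "coeff d 0 \<in> S - {0}" using dT PS_iff \<open>f0 = coeff d 0 * c0\<close> \<open>f0 \<noteq> 0\<close> by auto
  have "is_sgcd S F (coeff d 0)"
    unfolding is_sgcd_def
  proof (intro conjI ballI impI)
    show "coeff d 0 \<in> S - {0}" by (rule d0)
    show "sdvd S (coeff d 0) f" if "f \<in> F" for f using cf[OF that] unfolding sdvd_def by auto
    fix c assume c: "c \<in> S - {0}" and cd: "\<forall>f\<in>F. sdvd S c f"
    have "\<forall>f\<in>?F. sdvd ?T [:c:] f"
    proof
      fix f assume "f \<in> ?F"
      then obtain a where a: "a \<in> F" "f = [:a:]" by auto
      then obtain w where "w \<in> S - {0}" "a = c * w" using cd unfolding sdvd_def by auto
      then show "sdvd ?T [:c:] f" unfolding sdvd_def using a PS_const[OF sd]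
        by (auto intro!: bexI[of _ "[:w:]"])
    qed
    moreover have "[:c:] \<in> ?T - {0}" using c PS_const[OF sd] by auto
    ultimately have "sdvd ?T [:c:] d" using d unfolding is_sgcd_def by blast
    then obtain q where q: "q \<in> ?T" "d = [:c:] * q" unfolding sdvd_def by auto
    then have "coeff d 0 = c * coeff q 0" by simp
    then show "sdvd S c (coeff d 0)" unfolding sdvd_def using q PS_iff d0 by auto
  qed
  then show "\<exists>d. is_sgcd S F d" by blast
qed

lemma sdvd_trans:
  assumes "\<forall>a\<in>T. \<forall>b\<in>T. a * b \<in> T" "sdvd T (a::'a::idom) b" "sdvd T b c"
  shows "sdvd T a c"
proof -
  from assms obtain x y where "x \<in> T - {0}" "y \<in> T - {0}" "b = a * x" "c = b * y" unfolding sdvd_def by auto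
  then show ?thesis unfolding sdvd_def using assms(1) by (auto intro!: bexI[of _ "x*y"] simp: mult.assoc)
qed

lemma binary_gcd_finite:
  fixes T :: "'a::idom set"
  assumes one: "1 \<in> T" and mul: "\<forall>a\<in>T. \<forall>b\<in>T. a * b \<in> T"
    and bin: "\<And>a b. a \<in> T - {0} \<Longrightarrow> b \<in> T - {0} \<Longrightarrow> \<exists>d. is_sgcd T {a,b} d"
  shows "gcd_semidomain T"
  unfolding gcd_semidomain_def
proof (intro allI impI)
  fix F :: "'a set" assume F: "finite F \<and> F \<noteq> {} \<and> F \<subseteq> T - {0}"
  have "finite F" "F \<noteq> {}" using F by auto
  then show "\<exists>d. is_sgcd T F d" using F
  proof (induction F rule: finite_ne_induct)
    case (singleton x)
    then have "is_sgcd T {x} x" unfolding is_sgcd_def sdvd_def using one by (auto intro!: bexI[of _ 1])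
    then show ?case by blast
  next
    case (insert x F)
    then obtain d' where d': "is_sgcd T F d'" by auto
    have "d' \<in> T - {0}" "x \<in> T - {0}" using d' insert unfolding is_sgcd_def by auto
    then obtain d where d: "is_sgcd T {d', x} d" using bin by blast
    have "is_sgcd T (insert x F) d"
      unfolding is_sgcd_def
    proof (intro conjI ballI impI)
      show "d \<in> T - {0}" using d unfolding is_sgcd_def by auto
      fix f assume "f \<in> insert x F"
      then show "sdvd T d f"
      proof
        assume "f = x" then show ?thesis using d unfolding is_sgcd_def by auto
      next
        assume "f \<in> F"
        then have "sdvd T d' f" using d' unfolding is_sgcd_def by auto
        moreover have "sdvd T d d'" using d unfolding is_sgcd_def by auto
        ultimately show ?thesis using sdvd_trans[OF mul] by blast
      qed
    next
      fix c assume c: "c \<in> T - {0}" "\<forall>f\<in>insert x F. sdvd T c f"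
      then have "sdvd T c d'" using d' unfolding is_sgcd_def by auto
      then show "sdvd T c d" using d c unfolding is_sgcd_def by auto
    qed
    then show ?case by blast
  qed
qed



locale gd =
  fixes S :: "'a::idom set"
  assumes sd: "semidomain S" and neg: "is_domain_sub S" and gS: "gcd_semidomain S"
begin

lemma s0: "0 \<in> S" and s1: "1 \<in> S" and sadd: "a \<in> S \<Longrightarrow> b \<in> S \<Longrightarrow> a + b \<in> S"
  and smul: "a \<in> S \<Longrightarrow> b \<in> S \<Longrightarrow> a * b \<in> S"
  using sd_simps[OF sd] by auto

lemma sneg: "a \<in> S \<Longrightarrow> - a \<in> S" using neg unfolding is_domain_sub_def by auto

lemma sdiff: "a \<in> S \<Longrightarrow> b \<in> S \<Longrightarrow> a - b \<in> S"
proof -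
  assume "a \<in> S" "b \<in> S"
  then have "a + - b \<in> S" using sadd sneg by blast
  then show ?thesis by simp
qed

definition dv where "dv a b \<longleftrightarrow> (\<exists>c\<in>S. b = a * c)"

lemma dv_refl: "dv a a" unfolding dv_def using s1 by (auto intro!: bexI[of _ 1])
lemma dv_0: "dv a 0" unfolding dv_def using s0 by (auto intro!: bexI[of _ 0])
lemma dv_trans: "dv a b \<Longrightarrow> dv b c \<Longrightarrow> dv a c"
  unfolding dv_def using smul by (metis mult.assoc)
lemmas dv_trans_rule[trans] = dv_trans
lemma dv_multR: "dv a b \<Longrightarrow> c \<in> S \<Longrightarrow> dv a (b * c)"
  unfolding dv_def using smul by (metis mult.assoc)
lemma dv_multL: "dv a b \<Longrightarrow> c \<in> S \<Longrightarrow> dv a (c * b)"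
  using dv_multR by (simp add: mult.commute)
lemma dv_self_mult: "c \<in> S \<Longrightarrow> dv a (a * c)" unfolding dv_def by auto
lemma dv_mono: "dv a b \<Longrightarrow> dv (a * c) (b * c)"
  unfolding dv_def by (auto simp: ac_simps)
lemma dv_monoL: "dv a b \<Longrightarrow> dv (c * a) (c * b)"
  unfolding dv_def by (auto simp: ac_simps)
lemma dv_add: "dv a b \<Longrightarrow> dv a c \<Longrightarrow> dv a (b + c)"
  unfolding dv_def using sadd by (metis distrib_left)
lemma dv_diff: "dv a b \<Longrightarrow> dv a c \<Longrightarrow> dv a (b - c)"
  unfolding dv_def using sdiff by (metis right_diff_distrib)
lemma dv_cancel: "c \<noteq> 0 \<Longrightarrow> dv (c * a) (c * b) \<Longrightarrow> dv a b"
  unfolding dv_def by (auto simp: mult.assoc)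

definition g2 where "g2 a b = (if a = 0 then b else if b = 0 then a else (SOME d. is_sgcd S {a,b} d))"

lemma sdvd_dv: "sdvd S a b \<Longrightarrow> dv a b" unfolding sdvd_def dv_def by auto

lemma g2_props:
  assumes "a \<in> S" "b \<in> S"
  shows "g2 a b \<in> S" "dv (g2 a b) a" "dv (g2 a b) b" "\<And>c. c \<in> S \<Longrightarrow> dv c a \<Longrightarrow> dv c b \<Longrightarrow> dv c (g2 a b)"
proof -
  have "g2 a b \<in> S \<and> dv (g2 a b) a \<and> dv (g2 a b) b \<and> (\<forall>c\<in>S. dv c a \<longrightarrow> dv c b \<longrightarrow> dv c (g2 a b))"
  proof (cases "a = 0 \<or> b = 0")
    case True
    show ?thesis
    proof (cases "a = 0")
      case True
      then have "g2 a b = b" unfolding g2_def by simp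
      then show ?thesis using assms True dv_refl dv_0 by simp
    next
      case False
      then have "b = 0" using \<open>a = 0 \<or> b = 0\<close> by simp
      then have "g2 a b = a" unfolding g2_def by simp
      then show ?thesis using assms \<open>b = 0\<close> dv_refl dv_0 by simp
    qed
  next
    case False
    then have "finite {a,b}" "{a,b} \<noteq> {}" "{a,b} \<subseteq> S - {0}" using assms by auto
    then have "\<exists>d. is_sgcd S {a,b} d" using gS unfolding gcd_semidomain_def by blast
    then have d: "is_sgcd S {a,b} (g2 a b)" using False unfolding g2_def by (auto intro: someI_ex)
    have "dv c (g2 a b)" if c: "c \<in> S" "dv c a" "dv c b" for c
    proof -
      have "sdvd S c a" "sdvd S c b" using c False unfolding dv_def sdvd_def by auto
      moreover have "c \<noteq> 0" using c False unfolding dv_def by auto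
      ultimately have "sdvd S c (g2 a b)" using d c unfolding is_sgcd_def by auto
      then show ?thesis by (rule sdvd_dv)
    qed
    then show ?thesis using d sdvd_dv unfolding is_sgcd_def by auto
  qed
  then show "g2 a b \<in> S" "dv (g2 a b) a" "dv (g2 a b) b" "\<And>c. c \<in> S \<Longrightarrow> dv c a \<Longrightarrow> dv c b \<Longrightarrow> dv c (g2 a b)"
    by blast+
qed

lemma g2_mult:
  assumes "k \<in> S" "a \<in> S" "b \<in> S"
  shows "dv (g2 (k*a) (k*b)) (k * g2 a b)"
proof (cases "k = 0")
  case True then show ?thesis by (simp add: g2_def dv_refl)
next
  case False
  let ?e = "g2 (k*a) (k*b)"
  have kS: "k*a \<in> S" "k*b \<in> S" using assms smul by auto
  have "dv k ?e" using g2_props(4)[OF kS] assms dv_self_mult by auto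
  then obtain e' where e': "e' \<in> S" "?e = k * e'" unfolding dv_def by auto
  have "dv (k*e') (k*a)" using g2_props(2)[OF kS] e'(2) by simp
  then have "dv e' a" using dv_cancel[OF False] by blast
  moreover have "dv (k*e') (k*b)" using g2_props(3)[OF kS] e'(2) by simp
  then have "dv e' b" using dv_cancel[OF False] by blast
  ultimately have "dv e' (g2 a b)" using g2_props(4)[OF assms(2,3)] e' by auto
  then have "dv (k*e') (k * g2 a b)" by (rule dv_monoL)
  then show ?thesis using e'(2) by simp
qed

lemma euclid:
  assumes "d \<in> S" "a \<in> S" "b \<in> S" "dv (g2 d a) 1" "dv d (a * b)"
  shows "dv d b"
proof -
  have bS: "b*d \<in> S" "b*a \<in> S" using assms smul by auto
  have "dv d (d*b)" using dv_self_mult assms(3) by blast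
  then have "dv d (b*d)" by (simp add: mult.commute)
  moreover have "dv d (b*a)" using assms(5) by (simp add: mult.commute)
  ultimately have "dv d (g2 (b*d) (b*a))"
    using g2_props(4)[OF bS] assms(1) by blast
  also have "dv (g2 (b*d) (b*a)) (b * g2 d a)" by (rule g2_mult[OF assms(3) assms(1) assms(2)])
  also have "dv (b * g2 d a) (b * 1)" by (rule dv_monoL[OF assms(4)])
  finally show ?thesis by simp
qed

end


context gd begin

abbreviation "PS \<equiv> poly_semidomain S"

lemma PS_minus: "p \<in> PS \<Longrightarrow> - p \<in> PS" by (auto simp: PS_iff sneg)
lemma PS_diff: "p \<in> PS \<Longrightarrow> q \<in> PS \<Longrightarrow> p - q \<in> PS" by (auto simp: PS_iff sdiff)
lemma PS_monom: "a \<in> S \<Longrightarrow> monom a n \<in> PS" by (auto simp: PS_iff coeff_monom s0)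
lemma PS_coeff: "p \<in> PS \<Longrightarrow> coeff p i \<in> S" by (simp add: PS_iff)

lemmas PSc = PS_add[OF sd] PS_mult[OF sd] PS_smult[OF sd] PS_pCons[OF sd] PS_0[OF sd] PS_1[OF sd]
  PS_const[OF sd] PS_minus PS_diff PS_monom

definition alld where "alld k p \<longleftrightarrow> (\<forall>i. dv k (coeff p i))"
definition cop where "cop d f \<longleftrightarrow> (\<forall>e\<in>S. dv e d \<longrightarrow> alld e f \<longrightarrow> dv e 1)"
definition prim where "prim p \<longleftrightarrow> (\<forall>c\<in>S. alld c p \<longrightarrow> dv c 1)"

lemma pCons_PS: "pCons a p \<in> PS \<Longrightarrow> a \<in> S \<and> p \<in> PS"
  unfolding PS_iff by (metis coeff_pCons_0 coeff_pCons_Suc)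

lemma alld_pCons: "alld k (pCons a p) \<longleftrightarrow> dv k a \<and> alld k p"
  unfolding alld_def by (auto simp: coeff_pCons split: nat.splits)

lemma alld_0: "alld k 0" unfolding alld_def by (simp add: dv_0)

lemma GL:
  assumes "f \<in> PS" "g \<in> PS" "d \<in> S" "cop d f" "cop d g" "alld d (f*g)"
  shows "dv d 1"
  using assms
proof (induction "degree f + degree g" arbitrary: f g d rule: less_induct)
  case less
  obtain a0 f' where f: "f = pCons a0 f'" by (metis pCons_cases)
  have a0S: "a0 \<in> S" and f'P: "f' \<in> PS" using pCons_PS less.prems(1) f by auto
  define t where "t = g2 d a0"
  have tS: "t \<in> S" and td: "dv t d" and ta: "dv t a0" using g2_props[OF less.prems(3) a0S] t_def by auto
  have tu: "dv t 1"
  proof (cases "f' = 0")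
    case True
    have "alld t f" using f True ta by (simp add: alld_pCons alld_0)
    then show ?thesis using less.prems(4) tS td unfolding cop_def by blast
  next
    case False
    have deg: "degree f' < degree f" using f False by simp
    have "cop t f'" unfolding cop_def
    proof (intro ballI impI)
      fix e assume e: "e \<in> S" "dv e t" "alld e f'"
      then have "dv e d" "dv e a0" using td ta dv_trans by blast+
      then have "alld e f" using e f by (simp add: alld_pCons)
      then show "dv e 1" using less.prems(4) e \<open>dv e d\<close> unfolding cop_def by blast
    qed
    moreover have "cop t g" using less.prems(5) td dv_trans unfolding cop_def by blast
    moreover have "alld t (f' * g)" unfolding alld_def
    proof
      fix i
      have fg: "f * g = smult a0 g + pCons 0 (f' * g)" using f by (simp add: mult_pCons_left)
      have "coeff (f' * g) i = coeff (f*g) (Suc i) - a0 * coeff g (Suc i)"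
        unfolding fg by simp
      moreover have "dv t (coeff (f*g) (Suc i))" using less.prems(6) td dv_trans unfolding alld_def by blast
      moreover have "dv t (a0 * coeff g (Suc i))" using ta dv_multR PS_coeff less.prems(2) by blast
      ultimately show "dv t (coeff (f' * g) i)" using dv_diff by simp
    qed
    ultimately show ?thesis using less.hyps[of f' g t] deg f'P less.prems(2) tS by simp
  qed
  obtain b0 g' where g: "g = pCons b0 g'" by (metis pCons_cases)
  have b0S: "b0 \<in> S" and g'P: "g' \<in> PS" using pCons_PS less.prems(2) g by auto
  have "coeff (f*g) 0 = a0 * b0" using f g by simp
  then have "dv d (a0 * b0)" using less.prems(6) unfolding alld_def by metis
  then have db: "dv d b0" using euclid[OF less.prems(3) a0S b0S] tu t_def by blast
  show ?case
  proof (cases "g' = 0")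
    case True
    have "alld d g" using g True db by (simp add: alld_pCons alld_0)
    then show ?thesis using less.prems(5,3) dv_refl unfolding cop_def by blast
  next
    case False
    have deg: "degree g' < degree g" using g False by simp
    have "cop d g'" unfolding cop_def
    proof (intro ballI impI)
      fix e assume e: "e \<in> S" "dv e d" "alld e g'"
      then have "dv e b0" using db dv_trans by blast
      then have "alld e g" using e g by (simp add: alld_pCons)
      then show "dv e 1" using less.prems(5) e unfolding cop_def by blast
    qed
    moreover have "alld d (f * g')" unfolding alld_def
    proof
      fix i
      have fg: "f * g = smult b0 f + pCons 0 (f * g')" using g by (simp add: mult_pCons_right)
      have "coeff (f * g') i = coeff (f*g) (Suc i) - b0 * coeff f (Suc i)"
        unfolding fg by simp
      moreover have "dv d (coeff (f*g) (Suc i))" using less.prems(6) unfolding alld_def by blast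
      moreover have "dv d (b0 * coeff f (Suc i))" using db dv_multR PS_coeff less.prems(1) by blast
      ultimately show "dv d (coeff (f * g') i)" using dv_diff by simp
    qed
    ultimately show ?thesis using less.hyps[of f g' d] deg g'P less.prems(1,3,4) by simp
  qed
qed

end


context gd begin

lemma DIV:
  assumes "k \<in> S" "k \<noteq> 0" "h \<in> PS" "alld k h"
  shows "\<exists>h'\<in>PS. h = smult k h'"
  using assms(3,4)
proof (induction h rule: pCons_induct)
  case 0 then show ?case using PSc by (auto intro!: bexI[of _ 0])
next
  case (pCons a p)
  have "a \<in> S" "p \<in> PS" using pCons_PS pCons.prems(1) by auto
  moreover have "dv k a" "alld k p" using pCons.prems(2) by (auto simp: alld_pCons)
  ultimately obtain c p' where "c \<in> S" "a = k * c" "p' \<in> PS" "p = smult k p'"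
    using pCons.IH unfolding dv_def by blast
  then show ?case using PSc by (auto intro!: bexI[of _ "pCons c p'"])
qed

primrec contn where
  "contn p 0 = coeff p 0"
| "contn p (Suc n) = g2 (contn p n) (coeff p (Suc n))"

lemma contn_props:
  assumes "p \<in> PS"
  shows "contn p n \<in> S \<and> (\<forall>i\<le>n. dv (contn p n) (coeff p i)) \<and>
     (\<forall>c\<in>S. (\<forall>i\<le>n. dv c (coeff p i)) \<longrightarrow> dv c (contn p n))"
proof (induction n)
  case 0 then show ?case using assms PS_coeff dv_refl by auto
next
  case (Suc n)
  have cs: "contn p n \<in> S" "coeff p (Suc n) \<in> S" using Suc assms PS_coeff by auto
  note G = g2_props[OF cs]
  have "contn p (Suc n) \<in> S" using G by simp
  moreover have "\<forall>i\<le>Suc n. dv (contn p (Suc n)) (coeff p i)"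
  proof (intro allI impI)
    fix i assume "i \<le> Suc n"
    then consider "i \<le> n" | "i = Suc n" by linarith
    then show "dv (contn p (Suc n)) (coeff p i)"
    proof cases
      case 1 then show ?thesis using Suc G(2) dv_trans by auto
    next
      case 2 then show ?thesis using G(3) by simp
    qed
  qed
  moreover have "\<forall>c\<in>S. (\<forall>i\<le>Suc n. dv c (coeff p i)) \<longrightarrow> dv c (contn p (Suc n))"
    using Suc G(4) by simp
  ultimately show ?case by blast
qed

lemma dv0_eq: "dv 0 x \<Longrightarrow> x = 0" unfolding dv_def by auto

lemma PRIMDEC:
  assumes "h \<in> PS" "h \<noteq> 0"
  shows "\<exists>c hs. c \<in> S \<and> c \<noteq> 0 \<and> hs \<in> PS \<and> prim hs \<and> h = smult c hs \<and> (\<forall>b\<in>S. alld b h \<longrightarrow> dv b c)"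
proof -
  define c where "c = contn h (degree h)"
  have cP: "c \<in> S" "\<And>i. i \<le> degree h \<Longrightarrow> dv c (coeff h i)" "\<And>b. b \<in> S \<Longrightarrow> alld b h \<Longrightarrow> dv b c"
    using contn_props[OF assms(1), of "degree h"] unfolding c_def alld_def by auto
  have ac: "alld c h" unfolding alld_def
  proof
    fix i show "dv c (coeff h i)"
      using cP(2)[of i] dv_0 coeff_eq_0[of h i] by (cases "i \<le> degree h") auto
  qed
  have c0: "c \<noteq> 0"
  proof
    assume "c = 0"
    then have "\<forall>i. coeff h i = 0" using ac dv0_eq unfolding alld_def by blast
    then show False using assms(2) by (metis leading_coeff_0_iff)
  qed
  obtain hs where hs: "hs \<in> PS" "h = smult c hs" using DIV[OF cP(1) c0 assms(1) ac] by blast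
  have "prim hs" unfolding prim_def
  proof (intro ballI impI)
    fix b assume b: "b \<in> S" "alld b hs"
    have "alld (c*b) h" using b(2) hs(2) dv_monoL unfolding alld_def by simp
    then have "dv (c*b) c" using cP(3) smul cP(1) b(1) by blast
    then have "dv (c*b) (c*1)" by simp
    then show "dv b 1" using dv_cancel c0 by blast
  qed
  then show ?thesis using cP c0 hs by blast
qed

lemma prim_nz: "prim p \<Longrightarrow> p \<noteq> 0"
  unfolding prim_def using s0 alld_0 dv0_eq by fastforce

lemma GL2:
  assumes "p \<in> PS" "prim p" "h \<in> PS" "k \<in> S" "alld k (p*h)"
  shows "alld k h"
proof (cases "h = 0")
  case True then show ?thesis by (simp add: alld_0)
next
  case hnz: False
  show ?thesis
  proof (cases "k = 0")
    case True
    then have "p * h = 0" using assms(5) dv0_eq unfolding alld_def by (metis poly_eqI coeff_0)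
    then show ?thesis using prim_nz[OF assms(2)] hnz by simp
  next
    case knz: False
    obtain c hs where c: "c \<in> S" "c \<noteq> 0" "hs \<in> PS" "h = smult c hs" "\<And>b. b \<in> S \<Longrightarrow> alld b h \<Longrightarrow> dv b c"
      using PRIMDEC[OF assms(3) hnz] by blast
    define m where "m = g2 k c"
    have mS: "m \<in> S" "dv m k" "dv m c" "\<And>e. e \<in> S \<Longrightarrow> dv e k \<Longrightarrow> dv e c \<Longrightarrow> dv e m"
      using g2_props[OF assms(4) c(1)] m_def by auto
    have mnz: "m \<noteq> 0" using mS(2) knz dv0_eq by blast
    obtain k' where k': "k' \<in> S" "k = m * k'" using mS(2) unfolding dv_def by blast
    obtain c' where c': "c' \<in> S" "c = m * c'" using mS(3) unfolding dv_def by blast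
    define h' where "h' = smult c' hs"
    have h'P: "h' \<in> PS" using PSc c' c h'_def by blast
    have hh': "h = smult m h'" using c(4) c' h'_def by simp
    have "alld k' (p * h')" unfolding alld_def
    proof
      fix i
      have "dv (m*k') (m * coeff (p*h') i)" using assms(5) k' hh' unfolding alld_def by simp
      then show "dv k' (coeff (p*h') i)" using dv_cancel mnz by blast
    qed
    moreover have "cop k' h'" unfolding cop_def
    proof (intro ballI impI)
      fix e assume e: "e \<in> S" "dv e k'" "alld e h'"
      have "alld (m*e) h" using e(3) hh' dv_monoL unfolding alld_def by simp
      then have "dv (m*e) c" using c(5) smul mS(1) e(1) by blast
      moreover have "dv (m*e) k" using e(2) k' dv_monoL by simp
      ultimately have "dv (m*e) m" using mS(4) smul mS(1) e(1) by blast
      then have "dv (m*e) (m*1)" by simp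
      then show "dv e 1" using dv_cancel mnz by blast
    qed
    moreover have "cop k' p" using assms(2) unfolding cop_def prim_def by blast
    ultimately have "dv k' 1" using GL[OF assms(1) h'P k'(1)] by blast
    then obtain w where w: "w \<in> S" "1 = k' * w" unfolding dv_def by blast
    show ?thesis unfolding alld_def
    proof
      fix i
      have "coeff h i = m * coeff h' i" using hh' by simp
      also have "\<dots> = k * (w * coeff h' i)" using k' w by (metis mult.assoc mult.left_commute mult_1_right)
      finally show "dv k (coeff h i)" using dv_self_mult smul w(1) PS_coeff h'P by simp
    qed
  qed
qed

end


context gd begin

lemma spow: "a \<in> S \<Longrightarrow> a ^ k \<in> S"
  by (induction k) (auto simp: s1 smul)

lemma lc_S: "p \<in> PS \<Longrightarrow> lead_coeff p \<in> S" by (rule PS_coeff)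

lemma deg_drop: "p \<noteq> 0 \<Longrightarrow> degree p \<le> n \<Longrightarrow> coeff p n = 0 \<Longrightarrow> degree p < n"
  by (metis le_neq_implies_less leading_coeff_0_iff)

lemma PD:
  assumes "g \<in> PS" "g \<noteq> 0" "f \<in> PS"
  shows "\<exists>k q r. q \<in> PS \<and> r \<in> PS \<and> smult (lead_coeff g ^ k) f = q * g + r \<and> (r = 0 \<or> degree r < degree g)"
  using assms(3)
proof (induction "degree f" arbitrary: f rule: less_induct)
  case less
  show ?case
  proof (cases "f = 0 \<or> degree f < degree g")
    case True
    then show ?thesis using less.prems PSc by (intro exI[of _ "0::nat"] exI[of _ "0::'a poly"] exI[of _ f]) auto
  next
    case False
    then have fnz: "f \<noteq> 0" and dge: "degree g \<le> degree f" by auto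
    define n where "n = degree f - degree g"
    define M where "M = monom (lead_coeff f) n"
    define f1 where "f1 = smult (lead_coeff g) f - M * g"
    have MP: "M \<in> PS" unfolding M_def by (rule PS_monom[OF lc_S[OF less.prems]])
    have f1P: "f1 \<in> PS" unfolding f1_def by (intro PS_diff PS_smult[OF sd] lc_S assms(1) less.prems PS_mult[OF sd] MP)
    have "degree (M * g) \<le> degree f"
      using degree_mult_le[of M g] degree_monom_le[of "lead_coeff f" n] dge unfolding M_def n_def by linarith
    then have df1: "degree f1 \<le> degree f" unfolding f1_def
      by (metis degree_diff_le degree_smult_le order_trans)
    have "coeff (M * g) (degree f) = lead_coeff f * lead_coeff g"
      unfolding M_def n_def using dge by (simp add: coeff_monom_mult)
    then have cf1: "coeff f1 (degree f) = 0" unfolding f1_def by (simp add: mult.commute)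
    have lg: "lead_coeff g \<noteq> 0" using assms(2) by simp
    show ?thesis
    proof (cases "f1 = 0")
      case True
      then have "smult (lead_coeff g ^ 1) f = M * g + 0" unfolding f1_def by simp
      then show ?thesis using MP PS_0[OF sd] by blast
    next
      case False
      then have "degree f1 < degree f" using deg_drop df1 cf1 by blast
      then obtain k q r where kqr: "q \<in> PS" "r \<in> PS" "smult (lead_coeff g ^ k) f1 = q * g + r" "r = 0 \<or> degree r < degree g"
        using less.hyps f1P by blast
      have "smult (lead_coeff g ^ Suc k) f = smult (lead_coeff g ^ k) (f1 + M * g)"
        unfolding f1_def by (simp add: mult.commute)
      also have "\<dots> = smult (lead_coeff g ^ k) f1 + smult (lead_coeff g ^ k) M * g"
        by (simp add: smult_add_right)
      also have "\<dots> = (q + smult (lead_coeff g ^ k) M) * g + r" using kqr(3) by (simp add: algebra_simps)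
      finally have "smult (lead_coeff g ^ Suc k) f = (q + smult (lead_coeff g ^ k) M) * g + r" .
      moreover have "q + smult (lead_coeff g ^ k) M \<in> PS" by (intro PS_add[OF sd] kqr PS_smult[OF sd] MP spow lc_S assms(1))
      ultimately show ?thesis using kqr by blast
    qed
  qed
qed

lemma BZ:
  assumes "f \<in> PS" "f \<noteq> 0" "g \<in> PS"
  shows "\<exists>D a u v f' g'. D \<in> PS \<and> D \<noteq> 0 \<and> a \<in> S \<and> a \<noteq> 0 \<and> u \<in> PS \<and> v \<in> PS \<and> f' \<in> PS \<and> g' \<in> PS \<and>
           u * f + v * g = D \<and> smult a f = D * f' \<and> smult a g = D * g'"
  using assms
proof (induction "degree g" arbitrary: f g rule: less_induct)
  case less
  show ?case
  proof (cases "g = 0")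
    case True
    then show ?thesis using less.prems PS_0[OF sd] PS_1[OF sd] s1
      by (intro exI[of _ f] exI[of _ 1] exI[of _ 1] exI[of _ 0] exI[of _ 1] exI[of _ 0]) auto
  next
    case gnz: False
    obtain k q r where kqr: "q \<in> PS" "r \<in> PS" "smult (lead_coeff g ^ k) f = q * g + r" "r = 0 \<or> degree r < degree g"
      using PD[OF less.prems(3) gnz less.prems(1)] by blast
    define l where "l = lead_coeff g ^ k"
    have lS: "l \<in> S" "l \<noteq> 0" using spow lc_S less.prems(3) gnz unfolding l_def by auto
    show ?thesis
    proof (cases "r = 0")
      case True
      have "smult l f = g * q" using kqr(3) True l_def by (simp add: mult.commute)
      moreover have "smult l g = g * [:l:]" by (simp add: mult.commute)
      moreover have "0 * f + 1 * g = g" by simp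
      moreover have "[:l:] \<in> PS" using PS_const[OF sd] lS by blast
      ultimately show ?thesis using lS kqr PS_0[OF sd] PS_1[OF sd] gnz less.prems
        by (intro exI[of _ g] exI[of _ l] exI[of _ 0] exI[of _ 1] exI[of _ q] exI[of _ "[:l:]"]) auto
    next
      case False
      then have "degree r < degree g" using kqr(4) by simp
      then obtain D a u v g1 r1 where IH: "D \<in> PS" "D \<noteq> 0" "a \<in> S" "a \<noteq> 0" "u \<in> PS" "v \<in> PS" "g1 \<in> PS" "r1 \<in> PS"
        "u * g + v * r = D" "smult a g = D * g1" "smult a r = D * r1"
        using less.hyps[of r g] less.prems(3) gnz kqr(2) by blast
      have e1: "smult (a * l) f = D * (q * g1 + r1)"
      proof -
        have "smult (a * l) f = smult a (smult l f)" by simp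
        also have "\<dots> = smult a (q * g + r)" using kqr(3) l_def by simp
        also have "\<dots> = q * smult a g + smult a r" by (simp add: smult_add_right mult.commute)
        also have "\<dots> = q * (D * g1) + D * r1" by (simp only: IH(10,11))
        finally show ?thesis by (simp add: algebra_simps)
      qed
      have e2: "smult (a * l) g = D * smult l g1"
      proof -
        have "smult (a * l) g = smult l (smult a g)" by (simp add: mult.commute)
        also have "\<dots> = smult l (D * g1)" by (simp only: IH(10))
        finally show ?thesis by simp
      qed
      have e3: "smult l v * f + (u - v * q) * g = D"
      proof -
        have "smult l v * f + (u - v * q) * g = v * smult l f + u * g - v * q * g"
          by (simp add: algebra_simps)
        also have "\<dots> = v * (q * g + r) + u * g - v * q * g" using kqr(3) l_def by simp
        also have "\<dots> = u * g + v * r" by (simp add: algebra_simps)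
        finally show ?thesis using IH(9) by simp
      qed
      have "a * l \<in> S" "a * l \<noteq> 0" using IH lS smul by auto
      moreover have "smult l v \<in> PS" "u - v * q \<in> PS" "q * g1 + r1 \<in> PS" "smult l g1 \<in> PS"
        by (intro PS_smult[OF sd] PS_diff PS_mult[OF sd] PS_add[OF sd] IH lS kqr)+
      ultimately show ?thesis using e1 e2 e3 IH(1,2) by blast
    qed
  qed
qed

end


context gd begin

lemma smult_canc: fixes p q :: "'a poly" assumes "a \<noteq> 0" "smult a p = smult a q" shows "p = q"
proof (rule poly_eqI)
  fix n have "coeff (smult a p) n = coeff (smult a q) n" using assms(2) by simp
  then show "coeff p n = coeff q n" by (simp only: coeff_smult mult_left_cancel[OF assms(1)])
qed

lemma alld_smult': "p \<in> PS \<Longrightarrow> dv k c \<Longrightarrow> alld k (smult c p)"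
  unfolding alld_def using dv_multR PS_coeff by auto

lemma PGCD:
  assumes fP: "f \<in> PS" "f \<noteq> 0" and gP: "g \<in> PS" "g \<noteq> 0"
  shows "\<exists>G. is_sgcd PS {f,g} G"
proof -
  obtain D a u v f' g' where B: "D \<in> PS" "D \<noteq> 0" "a \<in> S" "a \<noteq> 0" "u \<in> PS" "v \<in> PS" "f' \<in> PS" "g' \<in> PS"
           "u * f + v * g = D" "smult a f = D * f'" "smult a g = D * g'"
    using BZ[OF fP gP(1)] by blast
  obtain cD Ds where D: "cD \<in> S" "cD \<noteq> 0" "Ds \<in> PS" "prim Ds" "D = smult cD Ds"
    using PRIMDEC[OF B(1,2)] by blast
  obtain cf fs where F: "cf \<in> S" "cf \<noteq> 0" "fs \<in> PS" "f = smult cf fs" "\<And>b. b \<in> S \<Longrightarrow> alld b f \<Longrightarrow> dv b cf"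
    using PRIMDEC[OF fP] by blast
  obtain cg gs where Gg: "cg \<in> S" "cg \<noteq> 0" "gs \<in> PS" "g = smult cg gs" "\<And>b. b \<in> S \<Longrightarrow> alld b g \<Longrightarrow> dv b cg"
    using PRIMDEC[OF gP] by blast
  define \<gamma> where "\<gamma> = g2 cf cg"
  have \<gamma>: "\<gamma> \<in> S" "dv \<gamma> cf" "dv \<gamma> cg" "\<And>c. c \<in> S \<Longrightarrow> dv c cf \<Longrightarrow> dv c cg \<Longrightarrow> dv c \<gamma>"
    using g2_props[OF F(1) Gg(1)] \<gamma>_def by auto
  have \<gamma>nz: "\<gamma> \<noteq> 0" using \<gamma>(2) F(2) dv0_eq by blast
  define G where "G = smult \<gamma> Ds"
  have GP: "G \<in> PS" unfolding G_def by (rule PS_smult[OF sd \<gamma>(1) D(3)])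
  have Gnz: "G \<noteq> 0" unfolding G_def using \<gamma>nz prim_nz[OF D(4)] by simp
  have sub: "\<exists>h2\<in>PS. h = G * h2" if h: "h \<in> PS" "h0 \<in> PS" "smult a h = D * h0" "alld \<gamma> h" for h h0
  proof -
    have e: "smult a h = Ds * smult cD h0" using h(3) D(5) by simp
    have "alld a (Ds * smult cD h0)" unfolding e[symmetric] alld_def using dv_self_mult PS_coeff h(1) by simp
    then have "alld a (smult cD h0)" using GL2[OF D(3,4) _ B(3)] PS_smult[OF sd D(1) h(2)] by blast
    then obtain h1 where h1: "h1 \<in> PS" "smult cD h0 = smult a h1"
      using DIV[OF B(3,4)] PS_smult[OF sd D(1) h(2)] by blast
    have "smult a h = smult a (Ds * h1)" using e h1(2) by simp
    then have hh: "h = Ds * h1" using smult_canc B(4) by blast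
    then have "alld \<gamma> h1" using GL2[OF D(3,4) h1(1) \<gamma>(1)] h(4) by simp
    then obtain h2 where "h2 \<in> PS" "h1 = smult \<gamma> h2" using DIV[OF \<gamma>(1) \<gamma>nz h1(1)] by blast
    then show ?thesis using hh G_def by (auto intro!: bexI[of _ h2])
  qed
  have "alld \<gamma> f" unfolding F(4) using alld_smult'[OF F(3) \<gamma>(2)] .
  then obtain hf where hf: "hf \<in> PS" "f = G * hf" using sub[OF fP(1) B(7) B(10)] by blast
  have "alld \<gamma> g" unfolding Gg(4) using alld_smult'[OF Gg(3) \<gamma>(3)] .
  then obtain hg where hg: "hg \<in> PS" "g = G * hg" using sub[OF gP(1) B(8) B(11)] by blast
  have cd: "sdvd PS c G" if c: "c \<in> PS - {0}" "sdvd PS c f" "sdvd PS c g" for c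
  proof -
    obtain m1 m2 where m: "m1 \<in> PS" "f = c * m1" "m2 \<in> PS" "g = c * m2" using c unfolding sdvd_def by blast
    obtain ck ks where K: "ck \<in> S" "ck \<noteq> 0" "ks \<in> PS" "prim ks" "c = smult ck ks"
      using PRIMDEC[of c] c by blast
    define H where "H = smult ck (u * m1 + v * m2)"
    have HP: "H \<in> PS" unfolding H_def by (intro PS_smult[OF sd] PS_add[OF sd] PS_mult[OF sd] K B m)
    have "D = c * (u * m1 + v * m2)" using B(9) m by (simp add: algebra_simps)
    then have DH: "D = ks * H" using K(5) H_def by simp
    have "alld cD D" using D(5) alld_smult'[OF D(3) dv_refl] by simp
    then have "alld cD H" using GL2[OF K(3,4) HP D(1)] DH by simp
    then obtain H1 where H1: "H1 \<in> PS" "H = smult cD H1" using DIV[OF D(1,2) HP] by blast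
    have "smult cD Ds = smult cD (ks * H1)" using D(5) DH H1 by simp
    then have DsH: "Ds = ks * H1" using smult_canc D(2) by blast
    have "alld ck f" using m(2) K(5) alld_smult'[of "ks * m1" ck ck] PS_mult[OF sd K(3) m(1)] dv_refl by simp
    then have "dv ck cf" using F(5) K(1) by blast
    moreover have "alld ck g" using m(4) K(5) alld_smult'[of "ks * m2" ck ck] PS_mult[OF sd K(3) m(3)] dv_refl by simp
    then have "dv ck cg" using Gg(5) K(1) by blast
    ultimately have "dv ck \<gamma>" using \<gamma>(4) K(1) by blast
    then obtain c' where c': "c' \<in> S" "\<gamma> = ck * c'" unfolding dv_def by blast
    have "G = c * smult c' H1" unfolding G_def using c'(2) K(5) DsH by (simp add: algebra_simps)
    moreover have "smult c' H1 \<in> PS" using PS_smult[OF sd c'(1) H1(1)] .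
    moreover have "smult c' H1 \<noteq> 0" using Gnz calculation(1) by auto
    ultimately show ?thesis unfolding sdvd_def by blast
  qed
  have "is_sgcd PS {f,g} G" unfolding is_sgcd_def
  proof (intro conjI ballI impI)
    show "G \<in> PS - {0}" using GP Gnz by simp
    fix h assume "h \<in> {f,g}"
    then show "sdvd PS G h"
    proof
      assume "h = f" then show ?thesis unfolding sdvd_def using hf fP by auto
    next
      assume "h \<in> {g}" then show ?thesis unfolding sdvd_def using hg gP by auto
    qed
  next
    fix c assume "c \<in> PS - {0}" "\<forall>h\<in>{f,g}. sdvd PS c h"
    then show "sdvd PS c G" using cd by blast
  qed
  then show ?thesis by blast
qed

lemma gcd_PS: "gcd_semidomain PS"
  by (rule binary_gcd_finite) (use PS_1[OF sd] PS_mult[OF sd] PGCD in auto)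

end

theorem proposition5p4:
  fixes S :: "'a::idom set"
  assumes "semidomain S"
  shows "gcd_semidomain (poly_semidomain S) \<longleftrightarrow> is_domain_sub S \<and> gcd_semidomain S"
proof
  assume "gcd_semidomain (poly_semidomain S)"
  then show "is_domain_sub S \<and> gcd_semidomain S" using F1 F2 assms by blast
next
  assume "is_domain_sub S \<and> gcd_semidomain S"
  then interpret gd S using assms by unfold_locales auto
  show "gcd_semidomain (poly_semidomain S)" by (rule gcd_PS)
qed


end
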